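(* Let $0<\alpha<1$, $T>0$, $y\in C^2[0,T]$, and $x\in(0,T]$. For an integer $N\ge 2$ put $h=T/N$ and suppose $n=x/h$ is an integer; write $y_j=y(jh)$. Define $\bar\sigma_0^{(\alpha)}=1/\Gamma(2-\alpha)$, $$\bar\sigma_k^{(\alpha)}=\begin{cases}\dfrac{(k-1)^{1-\alpha}-2k^{1-\alpha}+(k+1)^{1-\alpha}}{\Gamma(2-\alpha)}, & 1\le k\le\lceil N/5\rceil,\\[6pt] \dfrac{1}{\Gamma(-\alpha)k^{1+\alpha}}+\dfrac{\alpha}{12\,\Gamma(-2-\alpha)k^{3+\alpha}}, & \lceil N/5\rceil<k\le n-1,\end{cases}$$ $$\bar\sigma_n^{(\alpha)}=\begin{cases}\dfrac{(n-1)^{1-\alpha}-n^{1-\alpha}}{\Gamma(2-\alpha)}, & n\le\lceil N/5\rceil,\\[6pt] -\dfrac{n^{-\alpha}}{\Gamma(1-\alpha)}+\dfrac{n^{-\alpha-1}}{2\Gamma(-\alpha)}-\dfrac{n^{-\alpha-2}}{6\Gamma(-1-\alpha)}, & n>\lceil N/5\rceil.\end{cases}$$ Then, as $h\to0$ (over those $N$ for which $x/h$ is an integer), $$\frac{1}{h^\alpha}\sum_{k=0}^n\bar\sigma_k^{(\alpha)}y_{n-k}=y^{(\alpha)}(x)+O(h^{2-\alpha}).$$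
   Context: For $0<\alpha<1$ the Caputo derivative is $y^{(\alpha)}(x)=\frac{1}{\Gamma(1-\alpha)}\int_0^x \frac{y'(t)}{(x-t)^\alpha}\,dt$. $\Gamma$ is the Euler gamma function (analytically continued to negative non-integers); $\lceil\cdot\rceil$ is the ceiling function. *)

theory Defs
  imports "HOL-Analysis.Analysis"
begin

definition caputo :: "real \<Rightarrow> (real \<Rightarrow> real) \<Rightarrow> real \<Rightarrow> real" where
  "caputo \<alpha> y1 x = (1 / Gamma (1 - \<alpha>)) * integral {0..x} (\<lambda>t. y1 t / (x - t) powr \<alpha>)"

definition sigma_bar :: "real \<Rightarrow> nat \<Rightarrow> nat \<Rightarrow> nat \<Rightarrow> real" where
  "sigma_bar \<alpha> N n k =
    (let m = \<lceil>real N / 5\<rceil>; r = real k in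
     if k = 0 then 1 / Gamma (2 - \<alpha>)
     else if k = n then
       (if int n \<le> m then ((real n - 1) powr (1 - \<alpha>) - real n powr (1 - \<alpha>)) / Gamma (2 - \<alpha>)
        else - (real n powr (- \<alpha>)) / Gamma (1 - \<alpha>)
             + real n powr (- \<alpha> - 1) / (2 * Gamma (- \<alpha>))
             - real n powr (- \<alpha> - 2) / (6 * Gamma (- 1 - \<alpha>)))
     else
       (if int k \<le> m then ((r - 1) powr (1 - \<alpha>) - 2 * r powr (1 - \<alpha>) + (r + 1) powr (1 - \<alpha>)) / Gamma (2 - \<alpha>)
        else 1 / (Gamma (- \<alpha>) * r powr (1 + \<alpha>)) + \<alpha> / (12 * Gamma (- 2 - \<alpha>) * r powr (3 + \<alpha>))))"

end

theory Submission
  imports Defs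
begin


definition dd :: "real \<Rightarrow> nat \<Rightarrow> real \<Rightarrow> real" where
  "dd b m t = (\<Prod>i<m. (b - real i)) * t powr (b - real m)"

lemma dd_deriv: "t > 0 \<Longrightarrow> DERIV (dd b m) t :> dd b (Suc m) t"
proof -
  assume t: "t > 0"
  have "DERIV (\<lambda>t. t powr (b - real m)) t :> (b - real m) * t powr (b - real m - 1)"
    using has_real_derivative_powr[OF t] by blast
  then have "DERIV (dd b m) t :> (\<Prod>i<m. (b - real i)) * ((b - real m) * t powr (b - real m - 1))"
    unfolding dd_def by (rule DERIV_cmult)
  moreover have "(\<Prod>i<m. (b - real i)) * ((b - real m) * t powr (b - real m - 1)) = dd b (Suc m) t"
    unfolding dd_def by (simp add: algebra_simps)
  ultimately show ?thesis by simp
qed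

lemma dd0: "dd b 0 = (\<lambda>t. t powr b)" by (simp add: dd_def fun_eq_iff)

lemma dd_bound:
  assumes "0 \<le> b" "b < 1" "0 < k" "k / 2 \<le> t" "m \<ge> 1"
  shows "\<bar>dd b m t\<bar> \<le> \<bar>\<Prod>i<m. (b - real i)\<bar> * 2 powr real m * k powr (b - real m)"
proof -
  have e: "b - real m \<le> 0" using assms by simp
  have "t powr (b - real m) \<le> (k/2) powr (b - real m)"
    using powr_mono2'[OF e, of "k/2" t] assms by simp
  also have "\<dots> = k powr (b - real m) * 2 powr (real m - b)"
    using assms by (simp add: powr_divide powr_minus_divide divide_powr_uminus)
  also have "\<dots> \<le> k powr (b - real m) * 2 powr (real m)"
    by (rule mult_left_mono) (use assms in auto)
  finally have "t powr (b - real m) \<le> 2 powr real m * k powr (b - real m)" by (simp add: mult.commute)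
  moreover have "t > 0" using assms by simp
  ultimately show ?thesis unfolding dd_def
    by (simp add: abs_mult mult.assoc mult_left_mono)
qed

lemma taylor_mid:
  fixes b k :: real
  assumes "0 \<le> b" "b < 1" "2 \<le> k"
  shows "\<bar>(k-1) powr b - 2 * k powr b + (k+1) powr b - b*(b-1) * k powr (b-2)\<bar>
     \<le> 2 * \<bar>\<Prod>i<4. (b - real i)\<bar> * k powr (b - 4)"
proof -
  have D: "\<forall>m t. m < 4 \<and> k - 1 \<le> t \<and> t \<le> k + 1 \<longrightarrow> DERIV (dd b m) t :> dd b (Suc m) t"
    using assms by (auto intro!: dd_deriv)
  obtain t1 where t1: "k < t1" "t1 < k+1"
    "(k+1) powr b = (\<Sum>m<4. (dd b m k / fact m) * ((k+1) - k)^m) + (dd b 4 t1 / fact 4) * ((k+1) - k)^4"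
    using Taylor_up[of 4 "dd b" "\<lambda>t. t powr b" "k - 1" "k+1" k] D dd0 by force
  obtain t2 where t2: "k - 1 < t2" "t2 < k"
    "(k-1) powr b = (\<Sum>m<4. (dd b m k / fact m) * ((k-1) - k)^m) + (dd b 4 t2 / fact 4) * ((k-1) - k)^4"
    using Taylor_down[of 4 "dd b" "\<lambda>t. t powr b" "k - 1" "k+1" k] D dd0 by force
  have s: "\<And>g::nat\<Rightarrow>real. (\<Sum>m<4. g m) = g 0 + g 1 + g 2 + g 3"
    by (simp add: eval_nat_numeral)
  have d2: "dd b 2 k = b*(b-1) * k powr (b-2)" by (simp add: dd_def eval_nat_numeral)
  have d0: "dd b 0 k = k powr b" by (simp add: dd_def)
  have "(k-1) powr b - 2 * k powr b + (k+1) powr b - b*(b-1) * k powr (b-2)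
      = dd b 4 t1 / 24 + dd b 4 t2 / 24"
    using t1(3) t2(3) unfolding s by (simp add: d2 d0 fact_numeral field_simps)
  moreover have "\<bar>dd b 4 t1\<bar> \<le> \<bar>\<Prod>i<4. (b - real i)\<bar> * 2 powr real (4::nat) * k powr (b - real (4::nat))"
    by (rule dd_bound) (use assms t1 in auto)
  moreover have "\<bar>dd b 4 t2\<bar> \<le> \<bar>\<Prod>i<4. (b - real i)\<bar> * 2 powr real (4::nat) * k powr (b - real (4::nat))"
    by (rule dd_bound) (use assms t2 in auto)
  ultimately show ?thesis by simp
qed

lemma taylor_last:
  fixes b k :: real
  assumes "0 \<le> b" "b < 1" "2 \<le> k"
  shows "\<bar>(k powr b - (k-1) powr b) - (b * k powr (b-1) - b*(b-1)/2 * k powr (b-2))\<bar>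
     \<le> \<bar>\<Prod>i<3. (b - real i)\<bar> * 2 * k powr (b - 3)"
proof -
  have D: "\<forall>m t. m < 3 \<and> k - 1 \<le> t \<and> t \<le> k \<longrightarrow> DERIV (dd b m) t :> dd b (Suc m) t"
    using assms by (auto intro!: dd_deriv)
  obtain t2 where t2: "k - 1 < t2" "t2 < k"
    "(k-1) powr b = (\<Sum>m<3. (dd b m k / fact m) * ((k-1) - k)^m) + (dd b 3 t2 / fact 3) * ((k-1) - k)^3"
    using Taylor_down[of 3 "dd b" "\<lambda>t. t powr b" "k - 1" k k] D dd0 by force
  have s: "\<And>g::nat\<Rightarrow>real. (\<Sum>m<3. g m) = g 0 + g 1 + g 2"
    by (simp add: eval_nat_numeral)
  have d2: "dd b 2 k = b*(b-1) * k powr (b-2)" by (simp add: dd_def eval_nat_numeral)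
  have d1: "dd b (Suc 0) k = b * k powr (b-1)" by (simp add: dd_def)
  have d0: "dd b 0 k = k powr b" by (simp add: dd_def)
  have "(k powr b - (k-1) powr b) - (b * k powr (b-1) - b*(b-1)/2 * k powr (b-2))
      = dd b 3 t2 / 6"
    using t2(3) unfolding s by (simp add: d2 d1 d0 fact_numeral field_simps)
  moreover have "\<bar>dd b 3 t2\<bar> \<le> \<bar>\<Prod>i<3. (b - real i)\<bar> * 2 powr real (3::nat) * k powr (b - real (3::nat))"
    by (rule dd_bound) (use assms t2 in auto)
  ultimately show ?thesis by simp
qed

lemma Gamma_ids:
  fixes a :: real assumes "0 < a" "a < 1"
  shows "Gamma (2 - a) = (1 - a) * Gamma (1 - a)" "Gamma (1 - a) = (- a) * Gamma (- a)"
    "Gamma (2 - a) > 0" "Gamma (1 - a) > 0" "Gamma (- a) \<noteq> 0"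
proof -
  have ni: "\<And>z::real. z \<notin> \<int> \<Longrightarrow> z \<notin> \<int>\<^sub>\<le>\<^sub>0" using nonpos_Ints_subset_Ints by blast
  have nz: "\<And>z::real. 0 < z + 1 \<Longrightarrow> z + 1 < 1 \<Longrightarrow> z \<notin> \<int>"
  proof
    fix z :: real assume "0 < z + 1" "z + 1 < 1" "z \<in> \<int>"
    then obtain m where "z = of_int m" by (auto elim: Ints_cases)
    with \<open>0 < z + 1\<close> \<open>z + 1 < 1\<close> show False by simp
  qed
  have i1: "1 - a \<notin> \<int>\<^sub>\<le>\<^sub>0" using assms by (intro ni) (auto elim!: Ints_cases)
  have i0: "- a \<notin> \<int>\<^sub>\<le>\<^sub>0" using assms by (intro ni nz) auto
  show "Gamma (2 - a) = (1 - a) * Gamma (1 - a)"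
    using Gamma_plus1[OF i1] by (simp add: algebra_simps)
  show "Gamma (1 - a) = (- a) * Gamma (- a)"
    using Gamma_plus1[OF i0] by (simp add: algebra_simps)
  show "Gamma (2 - a) > 0" "Gamma (1 - a) > 0" using assms by auto
  show "Gamma (- a) \<noteq> 0" using Gamma_nonzero[OF i0] .
qed

lemma powr_le_inv_pow:
  fixes k e :: real assumes "1 \<le> k" "real m \<le> e"
  shows "k powr (- e) \<le> 1 / k ^ m"
proof -
  have "k powr (- e) \<le> k powr (- real m)" using assms by (intro powr_mono) auto
  also have "\<dots> = 1 / k ^ m" using assms by (simp add: powr_minus powr_realpow divide_inverse)
  finally show ?thesis .
qed

lemma wdiff_mid:
  fixes a k :: real
  assumes "0 < a" "a < 1" "2 \<le> k"
  shows "\<bar>((k-1) powr (1-a) - 2 * k powr (1-a) + (k+1) powr (1-a)) / Gamma (2-a)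
     - (1 / (Gamma (- a) * k powr (1 + a)) + a / (12 * Gamma (- 2 - a) * k powr (3 + a)))\<bar>
     \<le> (2 * \<bar>\<Prod>i<4. ((1-a) - real i)\<bar> / Gamma (2-a) + a / (12 * \<bar>Gamma (-2-a)\<bar>)) / k ^ 3" (is "\<bar>?lhs\<bar> \<le> ?rhs")
proof -
  note G = Gamma_ids[OF assms(1,2)]
  define E where "E = (k-1) powr (1-a) - 2 * k powr (1-a) + (k+1) powr (1-a) - (1-a)*((1-a)-1) * k powr ((1-a)-2)"
  have hE: "\<bar>E\<bar> \<le> 2 * \<bar>\<Prod>i<4. ((1-a) - real i)\<bar> * k powr ((1-a) - 4)"
    unfolding E_def by (rule taylor_mid) (use assms in auto)
  have k0: "k > 0" using assms by simp
  have g2: "Gamma(2-a) = (1-a)*(-a)*Gamma(-a)" using G by simp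
  have kp: "k powr ((1-a)-2) = 1 / k powr (1+a)"
  proof -
    have e: "(1-a)-2 = -(1+a)" by simp
    show ?thesis unfolding e powr_minus by (simp add: divide_inverse)
  qed
  have m1: "(1-a)*((1-a)-1) * k powr ((1-a)-2) / Gamma (2-a) = 1 / (Gamma (- a) * k powr (1 + a))"
    unfolding g2 kp using G k0 assms by (simp add: field_simps)
  have eq: "((k-1) powr (1-a) - 2 * k powr (1-a) + (k+1) powr (1-a)) / Gamma (2-a)
     - (1 / (Gamma (- a) * k powr (1 + a)) + a / (12 * Gamma (- 2 - a) * k powr (3 + a)))
     = E / Gamma (2-a) - a / (12 * Gamma (- 2 - a) * k powr (3 + a))"
    using m1 unfolding E_def by (simp add: diff_divide_distrib add_divide_distrib)
  have p1: "k powr ((1-a) - 4) \<le> 1 / k^3" using powr_le_inv_pow[of k 3 "3 + a"] assms by simp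
  have p2: "1 / k powr (3 + a) \<le> 1 / k^3"
  proof -
    have "k powr real (3::nat) \<le> k powr (3+a)" using assms by (intro powr_mono) auto
    then have "k^3 \<le> k powr (3+a)" using k0 by (simp add: powr_realpow)
    then show ?thesis using k0 by (intro divide_left_mono) auto
  qed
  have "\<bar>E / Gamma (2-a)\<bar> \<le> 2 * \<bar>\<Prod>i<4. ((1-a) - real i)\<bar> / Gamma (2-a) * (1 / k^3)" (is "\<bar>?u\<bar> \<le> ?X")
  proof -
    have "\<bar>E / Gamma (2-a)\<bar> = \<bar>E\<bar> / Gamma (2-a)" using G by simp
    also have "\<dots> \<le> 2 * \<bar>\<Prod>i<4. ((1-a) - real i)\<bar> * k powr ((1-a) - 4) / Gamma (2-a)"
      using hE G by (intro divide_right_mono) auto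
    also have "\<dots> \<le> 2 * \<bar>\<Prod>i<4. ((1-a) - real i)\<bar> * (1/k^3) / Gamma (2-a)"
      using G p1 by (intro divide_right_mono mult_left_mono) auto
    finally show ?thesis by (simp add: mult.commute mult.left_commute)
  qed
  moreover have "\<bar>a / (12 * Gamma (- 2 - a) * k powr (3 + a))\<bar> \<le> a / (12 * \<bar>Gamma (-2-a)\<bar>) * (1 / k^3)" (is "\<bar>?v\<bar> \<le> ?Y")
  proof -
    have "\<bar>a / (12 * Gamma (- 2 - a) * k powr (3 + a))\<bar> = a / (12 * \<bar>Gamma (-2-a)\<bar>) * (1 / k powr (3+a))"
      using assms k0 by (simp add: abs_mult)
    also have "\<dots> \<le> a / (12 * \<bar>Gamma (-2-a)\<bar>) * (1 / k^3)"
      using p2 assms by (intro mult_left_mono) auto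
    finally show ?thesis .
  qed
  ultimately have "\<bar>?lhs\<bar> \<le> ?X + ?Y" unfolding eq
    using abs_triangle_ineq4[of ?u ?v] by linarith
  also have "?X + ?Y = ?rhs" using k0 by (simp add: field_simps)
  finally show ?thesis .
qed

lemma wdiff_last:
  fixes a k :: real
  assumes "0 < a" "a < 1" "2 \<le> k"
  shows "\<bar>((k-1) powr (1-a) - k powr (1-a)) / Gamma (2-a)
     - (- (k powr (- a)) / Gamma (1 - a) + k powr (- a - 1) / (2 * Gamma (- a))
             - k powr (- a - 2) / (6 * Gamma (- 1 - a)))\<bar>
     \<le> (2 * \<bar>\<Prod>i<3. ((1-a) - real i)\<bar> / Gamma (2-a) + 1 / (6 * \<bar>Gamma (-1-a)\<bar>)) / k ^ 2" (is "\<bar>?lhs\<bar> \<le> ?rhs")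
proof -
  note G = Gamma_ids[OF assms(1,2)]
  define E where "E = (k powr (1-a) - (k-1) powr (1-a)) - ((1-a) * k powr ((1-a)-1) - (1-a)*((1-a)-1)/2 * k powr ((1-a)-2))"
  have hE: "\<bar>E\<bar> \<le> \<bar>\<Prod>i<3. ((1-a) - real i)\<bar> * 2 * k powr ((1-a) - 3)"
    unfolding E_def by (rule taylor_last) (use assms in auto)
  have k0: "k > 0" using assms by simp
  have g2: "Gamma(2-a) = (1-a)*(-a)*Gamma(-a)" using G by simp
  have m1: "(1-a) * k powr ((1-a)-1) / Gamma (2-a) = k powr (- a) / Gamma (1 - a)"
    unfolding G(1) using G k0 assms by simp
  have m2: "(1-a)*((1-a)-1)/2 * k powr ((1-a)-2) / Gamma (2-a) = k powr (- a - 1) / (2 * Gamma (- a))"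
  proof -
    have e: "(1-a)-2 = -a-1" by simp
    show ?thesis unfolding g2 e using G k0 assms by (simp add: field_simps)
  qed
  have eq: "((k-1) powr (1-a) - k powr (1-a)) / Gamma (2-a)
     - (- (k powr (- a)) / Gamma (1 - a) + k powr (- a - 1) / (2 * Gamma (- a))
             - k powr (- a - 2) / (6 * Gamma (- 1 - a)))
     = - E / Gamma (2-a) + k powr (- a - 2) / (6 * Gamma (- 1 - a))"
    using m1 m2 unfolding E_def by (simp add: diff_divide_distrib add_divide_distrib)
  have p1: "k powr ((1-a) - 3) \<le> 1 / k^2" using powr_le_inv_pow[of k 2 "2 + a"] assms by simp
  have p2: "k powr (- a - 2) \<le> 1 / k^2"
  proof -
    have e: "-a-2 = -(2+a)" by simp
    show ?thesis unfolding e using powr_le_inv_pow[of k 2 "2 + a"] assms by simp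
  qed
  have "\<bar>- E / Gamma (2-a)\<bar> \<le> 2 * \<bar>\<Prod>i<3. ((1-a) - real i)\<bar> / Gamma (2-a) * (1 / k^2)" (is "\<bar>?u\<bar> \<le> ?X")
  proof -
    have "\<bar>- E / Gamma (2-a)\<bar> = \<bar>E\<bar> / Gamma (2-a)" using G by simp
    also have "\<dots> \<le> \<bar>\<Prod>i<3. ((1-a) - real i)\<bar> * 2 * k powr ((1-a) - 3) / Gamma (2-a)"
      using hE G by (intro divide_right_mono) auto
    also have "\<dots> \<le> \<bar>\<Prod>i<3. ((1-a) - real i)\<bar> * 2 * (1/k^2) / Gamma (2-a)"
      using G p1 by (intro divide_right_mono mult_left_mono) auto
    finally show ?thesis by (simp add: mult.commute mult.left_commute)
  qed
  moreover have "\<bar>k powr (- a - 2) / (6 * Gamma (- 1 - a))\<bar> \<le> 1 / (6 * \<bar>Gamma (-1-a)\<bar>) * (1 / k^2)" (is "\<bar>?v\<bar> \<le> ?Y")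
  proof -
    have "\<bar>k powr (- a - 2) / (6 * Gamma (- 1 - a))\<bar> = 1 / (6 * \<bar>Gamma (-1-a)\<bar>) * k powr (- a - 2)"
      using assms k0 by (simp add: abs_mult)
    also have "\<dots> \<le> 1 / (6 * \<bar>Gamma (-1-a)\<bar>) * (1 / k^2)"
      using p2 assms by (intro mult_left_mono) auto
    finally show ?thesis .
  qed
  ultimately have "\<bar>?lhs\<bar> \<le> ?X + ?Y" unfolding eq
    using abs_triangle_ineq[of ?u ?v] by linarith
  also have "?X + ?Y = ?rhs" using k0 by (simp add: field_simps)
  finally show ?thesis .
qed



lemma w_int:
  fixes a u v x :: real
  assumes "0 < a" "a < 1" "u \<le> v" "v \<le> x"
  shows "((\<lambda>t. 1 / (x - t) powr a) has_integral ((x-u) powr (1-a) - (x-v) powr (1-a)) / (1-a)) {u..v}"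
proof -
  define F where "F t = - ((x - t) powr (1-a)) / (1-a)" for t
  have "((\<lambda>t. 1 / (x - t) powr a) has_integral (F v - F u)) {u..v}"
  proof (rule fundamental_theorem_of_calculus_interior[OF assms(3)])
    show "continuous_on {u..v} F" unfolding F_def
      using assms by (intro continuous_intros continuous_on_powr') auto
    fix t assume t: "t \<in> {u<..<v}"
    then have xt: "x - t > 0" using assms by auto
    have "((\<lambda>t. (x - t) powr (1-a)) has_real_derivative (1-a) * (x-t) powr (1-a-1) * (-1)) (at t)"
      using has_real_derivative_powr[OF xt, of "1-a"] DERIV_chain2[where g="\<lambda>t. x - t"]
      using xt by (auto intro!: derivative_eq_intros)
    then have "(F has_real_derivative - ((1-a) * (x-t) powr (1-a-1) * (-1)) / (1-a)) (at t)"
      unfolding F_def by (rule DERIV_cdivide[OF DERIV_minus])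
    moreover have "- ((1-a) * (x-t) powr (1-a-1) * (-1)) / (1-a) = 1 / (x - t) powr a"
      using assms xt by (simp add: powr_minus divide_inverse)
    ultimately show "(F has_vector_derivative 1 / (x - t) powr a) (at t)"
      by (simp add: has_real_derivative_iff_has_vector_derivative)
  qed
  moreover have "F v - F u = ((x-u) powr (1-a) - (x-v) powr (1-a)) / (1-a)"
    unfolding F_def by (simp add: diff_divide_distrib)
  ultimately show ?thesis by simp
qed

lemma L1_err:
  fixes a T x h M2 :: real and y y1 y2 :: "real \<Rightarrow> real" and n :: nat
  assumes a: "0 < a" "a < 1" and h: "0 < h" and n: "1 \<le> n" and xn: "x = real n * h" and xT: "x \<le> T"
    and d1: "\<And>t. t \<in> {0..T} \<Longrightarrow> (y has_real_derivative y1 t) (at t within {0..T})"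
    and d2: "\<And>t. t \<in> {0..T} \<Longrightarrow> (y1 has_real_derivative y2 t) (at t within {0..T})"
    and M2: "\<And>t. t \<in> {0..T} \<Longrightarrow> \<bar>y2 t\<bar> \<le> M2"
  shows "\<bar>(\<Sum>i<n. (y (x - real i * h) - y (x - real (Suc i) * h)) / h
            * (h powr (1-a) * (real (Suc i) powr (1-a) - real i powr (1-a)) / (1-a)))
          - integral {0..x} (\<lambda>t. y1 t / (x - t) powr a)\<bar> \<le> M2 * h powr (2-a) * (1 + 1/(1-a))"
proof -
  define g where "g t = y1 t / (x - t) powr a" for t
  define w where "w t = 1 / (x - t) powr a" for t
  define u where "u i = x - real (Suc i) * h" for i
  define v where "v i = x - real i * h" for i
  define W where "W i = h powr (1-a) * (real (Suc i) powr (1-a) - real i powr (1-a)) / (1-a)" for i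
  define \<delta> where "\<delta> i = (y (v i) - y (u i)) / h" for i
  have x0: "0 < x" using xn h n by simp
  have uv: "\<And>i. i < n \<Longrightarrow> 0 \<le> u i \<and> u i \<le> v i \<and> v i \<le> x \<and> v i - u i = h"
  proof -
    fix i assume "i < n"
    then have "real (Suc i) * h \<le> real n * h" using h by (intro mult_right_mono) auto
    then show "0 \<le> u i \<and> u i \<le> v i \<and> v i \<le> x \<and> v i - u i = h"
      using h unfolding u_def v_def xn by (auto simp: algebra_simps)
  qed
  have sub: "\<And>i. i < n \<Longrightarrow> {u i..v i} \<subseteq> {0..x}" using uv by auto
  have subT: "{0..x} \<subseteq> {0..T}" using xT by auto
  have M2pos: "0 \<le> M2" using M2[of 0] x0 xT by auto
  have lip: "\<And>s t. s \<in> {0..T} \<Longrightarrow> t \<in> {0..T} \<Longrightarrow> \<bar>y1 s - y1 t\<bar> \<le> M2 * \<bar>s - t\<bar>"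
    using field_differentiable_bound[of "{0..T}" y1 y2 M2] d2 M2 by auto
  have y1c: "continuous_on {0..T} y1" by (rule DERIV_continuous_on[OF d2])
  have Wint: "\<And>i. i < n \<Longrightarrow> (w has_integral W i) {u i..v i}"
  proof -
    fix i assume i: "i < n"
    have "(w has_integral ((x - u i) powr (1-a) - (x - v i) powr (1-a)) / (1-a)) {u i..v i}"
      unfolding w_def using w_int[of a "u i" "v i" x] a uv[OF i] by auto
    moreover have "(x - u i) powr (1-a) = real (Suc i) powr (1-a) * h powr (1-a)"
      unfolding u_def using h by (simp add: powr_mult)
    moreover have "(x - v i) powr (1-a) = real i powr (1-a) * h powr (1-a)"
      unfolding v_def using h by (simp add: powr_mult)
    ultimately show "(w has_integral W i) {u i..v i}" unfolding W_def by (simp add: algebra_simps)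
  qed
  have wint0: "w integrable_on {0..x}"
    using w_int[of a 0 x x] a x0 unfolding w_def by (auto intro: has_integral_integrable)
  have wabs: "w absolutely_integrable_on {0..x}"
  proof (rule nonnegative_absolutely_integrable_1[OF wint0])
    fix t assume "t \<in> {0..x}" then show "0 \<le> w t" unfolding w_def by simp
  qed
  have gabs: "(\<lambda>t. y1 t * w t) absolutely_integrable_on {0..x}"
  proof (rule absolutely_integrable_bounded_measurable_product_real[OF _ _ _ wabs])
    show "y1 \<in> borel_measurable (lebesgue_on {0..x})"
      using continuous_on_subset[OF y1c subT] by (intro continuous_imp_measurable_on_sets_lebesgue) auto
    show "{0..x} \<in> sets lebesgue" by simp
    show "bounded (y1 ` {0..x})"
      using continuous_on_subset[OF y1c subT] by (intro compact_imp_bounded compact_continuous_image) auto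
  qed
  have gint: "g integrable_on {0..x}"
  proof -
    have "(\<lambda>t. y1 t * w t) integrable_on {0..x}" using gabs absolutely_integrable_on_def by blast
    moreover have "(\<lambda>t. y1 t * w t) = g" unfolding g_def w_def by auto
    ultimately show ?thesis by simp
  qed
  have gsub: "\<And>i. i < n \<Longrightarrow> g integrable_on {u i..v i}"
    using integrable_on_subinterval[OF gint sub] by blast
  have split: "\<And>j. j \<le> n \<Longrightarrow> integral {x - real j * h..x} g = (\<Sum>i<j. integral {u i..v i} g)"
  proof -
    fix j show "j \<le> n \<Longrightarrow> integral {x - real j * h..x} g = (\<Sum>i<j. integral {u i..v i} g)"
    proof (induction j)
      case 0 then show ?case by simp
    next
      case (Suc j)
      have jn: "j < n" using Suc by simp
      have "integral {u j..x} g = integral {u j..v j} g + integral {v j..x} g"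
      proof -
        have "g integrable_on {u j..x}"
          using integrable_on_subinterval[OF gint] uv[OF jn] by auto
        then show ?thesis using Henstock_Kurzweil_Integration.integral_combine[where a="u j" and c="v j" and b=x and f=g] uv[OF jn] by simp
      qed
      moreover have "x - real (Suc j) * h = u j" by (simp add: u_def)
      moreover have "integral {x - real j * h..x} g = (\<Sum>i<j. integral {u i..v i} g)"
        using Suc jn by simp
      ultimately show ?case by (simp add: v_def)
    qed
  qed
  have split_n: "integral {0..x} g = (\<Sum>i<n. integral {u i..v i} g)"
    using split[of n] xn by simp
  have mvt: "\<And>i. i < n \<Longrightarrow> \<exists>\<xi>\<in>{u i<..<v i}. \<delta> i = y1 \<xi>"
  proof -
    fix i assume i: "i < n"
    have "\<exists>\<xi>\<in>{u i<..<v i}. y (v i) - y (u i) = y1 \<xi> * (v i - u i)"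
    proof (rule mvt_simple)
      show "u i < v i" using uv[OF i] h by auto
      fix t assume "u i \<le> t" "t \<le> v i"
      then have tT: "t \<in> {0..T}" using uv[OF i] xT by auto
      have "(y has_real_derivative y1 t) (at t within {u i..v i})"
        using has_field_derivative_subset[OF d1[OF tT]] uv[OF i] xT by auto
      then show "(y has_derivative (*) (y1 t)) (at t within {u i..v i})"
        by (simp add: has_field_derivative_def)
    qed
    then show "\<exists>\<xi>\<in>{u i<..<v i}. \<delta> i = y1 \<xi>" unfolding \<delta>_def using uv[OF i] h by auto
  qed
  have dbound: "\<And>i t. i < n \<Longrightarrow> t \<in> {u i..v i} \<Longrightarrow> \<bar>\<delta> i - y1 t\<bar> \<le> M2 * h"
  proof -
    fix i t assume i: "i < n" and t: "t \<in> {u i..v i}"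
    obtain \<xi> where \<xi>: "\<xi> \<in> {u i<..<v i}" "\<delta> i = y1 \<xi>" using mvt[OF i] by blast
    have "\<bar>y1 \<xi> - y1 t\<bar> \<le> M2 * \<bar>\<xi> - t\<bar>" using \<xi> t uv[OF i] xT by (intro lip) auto
    also have "\<dots> \<le> M2 * h" using \<xi> t uv[OF i] M2pos by (intro mult_left_mono) auto
    finally show "\<bar>\<delta> i - y1 t\<bar> \<le> M2 * h" using \<xi> by simp
  qed
  define E where "E i = \<delta> i * W i - integral {u i..v i} g" for i
  have Eint: "\<And>i. i < n \<Longrightarrow> ((\<lambda>t. (\<delta> i - y1 t) * w t) has_integral E i) {u i..v i}"
  proof -
    fix i assume i: "i < n"
    have "((\<lambda>t. \<delta> i * w t - g t) has_integral (\<delta> i * W i - integral {u i..v i} g)) {u i..v i}"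
      by (intro has_integral_diff has_integral_mult_right Wint[OF i] integrable_integral gsub[OF i])
    moreover have "(\<lambda>t. \<delta> i * w t - g t) = (\<lambda>t. (\<delta> i - y1 t) * w t)"
      unfolding g_def w_def by (auto simp: diff_divide_distrib)
    ultimately show "((\<lambda>t. (\<delta> i - y1 t) * w t) has_integral E i) {u i..v i}" unfolding E_def by simp
  qed
  have E0: "\<bar>E 0\<bar> \<le> M2 * h * (h powr (1-a) / (1-a))"
  proof -
    have n0: "0 < n" using n by simp
    note E0i = Eint[OF n0] and W0i = Wint[OF n0]
    have "\<bar>E 0\<bar> = norm (integral {u 0..v 0} (\<lambda>t. (\<delta> 0 - y1 t) * w t))"
      using E0i by (simp add: integral_unique)
    also have "\<dots> \<le> integral {u 0..v 0} (\<lambda>t. M2 * h * w t)"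
    proof (rule integral_norm_bound_integral)
      show "(\<lambda>t. (\<delta> 0 - y1 t) * w t) integrable_on {u 0..v 0}" using E0i by (rule has_integral_integrable)
      show "(\<lambda>t. M2 * h * w t) integrable_on {u 0..v 0}"
        using has_integral_mult_right[OF W0i, of "M2*h"] by (rule has_integral_integrable)
      fix t assume t: "t \<in> {u 0..v 0}"
      have "0 \<le> w t" unfolding w_def by simp
      then show "norm ((\<delta> 0 - y1 t) * w t) \<le> M2 * h * w t"
        using dbound[OF n0 t] by (simp add: abs_mult mult_right_mono)
    qed
    also have "\<dots> = M2 * h * W 0"
      using W0i by (simp add: integral_unique)
    also have "W 0 = h powr (1-a) / (1-a)" unfolding W_def by simp
    finally show ?thesis .
  qed
  have Ei: "\<And>i. 1 \<le> i \<Longrightarrow> i < n \<Longrightarrow> \<bar>E i\<bar> \<le> M2 * h * h * (w (v i) - w (u i))"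
  proof -
    fix i assume i1: "1 \<le> i" and i: "i < n"
    have y1int: "(y1 has_integral (y (v i) - y (u i))) {u i..v i}"
    proof (rule fundamental_theorem_of_calculus)
      show "u i \<le> v i" using uv[OF i] by auto
      fix t assume "t \<in> {u i..v i}"
      then have tT: "t \<in> {0..T}" using uv[OF i] xT by auto
      have "(y has_real_derivative y1 t) (at t within {u i..v i})"
        using has_field_derivative_subset[OF d1[OF tT]] uv[OF i] xT by auto
      then show "(y has_vector_derivative y1 t) (at t within {u i..v i})"
        by (simp add: has_real_derivative_iff_has_vector_derivative)
    qed
    have z: "((\<lambda>t. (\<delta> i - y1 t) * w (u i)) has_integral 0) {u i..v i}"
    proof -
      have c: "((\<lambda>t. \<delta> i) has_integral (\<delta> i * h)) {u i..v i}"
        using has_integral_const_real[of "\<delta> i" "u i" "v i"] uv[OF i] by (simp add: mult.commute)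
      have "((\<lambda>t. \<delta> i - y1 t) has_integral (\<delta> i * h - (y (v i) - y (u i)))) {u i..v i}"
        by (rule has_integral_diff[OF c y1int])
      moreover have "\<delta> i * h - (y (v i) - y (u i)) = 0"
        unfolding \<delta>_def using h by simp
      ultimately have "((\<lambda>t. \<delta> i - y1 t) has_integral 0) {u i..v i}" by simp
      from has_integral_mult_left[OF this, of "w (u i)"] show ?thesis by simp
    qed
    have int2: "((\<lambda>t. (\<delta> i - y1 t) * (w t - w (u i))) has_integral E i) {u i..v i}"
      using has_integral_diff[OF Eint[OF i] z] by (simp add: algebra_simps)
    have vx: "v i < x" using i1 h unfolding v_def by simp
    have wmono: "\<And>s t. s \<le> t \<Longrightarrow> t < x \<Longrightarrow> w s \<le> w t"
    proof -
      fix s t :: real assume st: "s \<le> t" "t < x"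
      have "(x - t) powr a \<le> (x - s) powr a" using st a by (intro powr_mono2) auto
      then show "w s \<le> w t" unfolding w_def using st a
        by (intro divide_left_mono) auto
    qed
    have "\<bar>E i\<bar> = norm (integral {u i..v i} (\<lambda>t. (\<delta> i - y1 t) * (w t - w (u i))))"
      using int2 by (simp add: integral_unique)
    also have "\<dots> \<le> integral {u i..v i} (\<lambda>t. M2 * h * (w (v i) - w (u i)))"
    proof (rule integral_norm_bound_integral)
      show "(\<lambda>t. (\<delta> i - y1 t) * (w t - w (u i))) integrable_on {u i..v i}" using int2 by (rule has_integral_integrable)
      show "(\<lambda>t. M2 * h * (w (v i) - w (u i))) integrable_on {u i..v i}" by (rule integrable_const_ivl)
      fix t assume t: "t \<in> {u i..v i}"
      have "0 \<le> w t - w (u i)" "w t - w (u i) \<le> w (v i) - w (u i)"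
        using wmono[of "u i" t] wmono[of t "v i"] t vx by auto
      then have "\<bar>w t - w (u i)\<bar> \<le> w (v i) - w (u i)" by simp
      then show "norm ((\<delta> i - y1 t) * (w t - w (u i))) \<le> M2 * h * (w (v i) - w (u i))"
        using dbound[OF i t] M2pos h unfolding real_norm_def abs_mult
        by (intro mult_mono) auto
    qed
    also have "\<dots> = M2 * h * h * (w (v i) - w (u i))"
      using uv[OF i] by simp
    finally show "\<bar>E i\<bar> \<le> M2 * h * h * (w (v i) - w (u i))" .
  qed
  define \<phi> where "\<phi> i = 1 / (real i * h) powr a" for i
  have wv: "\<And>i. w (v i) = \<phi> i" unfolding w_def v_def \<phi>_def by simp
  have wu: "\<And>i. w (u i) = \<phi> (Suc i)" unfolding w_def u_def \<phi>_def by simp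
  have sumE: "(\<Sum>i<n. \<delta> i * W i) - integral {0..x} g = (\<Sum>i<n. E i)"
    unfolding split_n E_def by (simp add: sum_subtractf)
  have "\<bar>\<Sum>i<n. E i\<bar> \<le> (\<Sum>i<n. \<bar>E i\<bar>)" by (rule sum_abs)
  also have "\<dots> = \<bar>E 0\<bar> + (\<Sum>i=1..<n. \<bar>E i\<bar>)"
  proof -
    have "{..<n} = insert 0 {1..<n}" using n by auto
    then show ?thesis by simp
  qed
  also have "\<dots> \<le> M2 * h * (h powr (1-a) / (1-a)) + (\<Sum>i=1..<n. M2 * h * h * (\<phi> i - \<phi> (Suc i)))"
    using E0 Ei wv wu by (intro add_mono sum_mono) auto
  also have "(\<Sum>i=1..<n. M2 * h * h * (\<phi> i - \<phi> (Suc i))) = M2 * h * h * (\<phi> 1 - \<phi> n)"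
  proof -
    have "(\<Sum>i=1..<n. (\<phi> i - \<phi> (Suc i))) = - (\<Sum>i=1..<n. (\<phi> (Suc i) - \<phi> i))"
      by (simp add: sum_negf[symmetric])
    also have "\<dots> = \<phi> 1 - \<phi> n" using sum_Suc_diff'[OF n, of \<phi>] by simp
    finally show ?thesis by (simp add: sum_distrib_left[symmetric])
  qed
  also have "M2 * h * h * (\<phi> 1 - \<phi> n) \<le> M2 * h * h * \<phi> 1"
    using M2pos h by (intro mult_left_mono) (auto simp: \<phi>_def)
  finally have bnd: "\<bar>\<Sum>i<n. E i\<bar> \<le> M2 * h * (h powr (1-a) / (1-a)) + M2 * h * h * \<phi> 1" by simp
  have e1: "h * h powr (1-a) = h powr (2-a)"
    using h by (simp add: powr_add[symmetric] powr_mult_base)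
  have e2: "h * h * \<phi> 1 = h powr (2-a)"
    using h unfolding \<phi>_def by (simp add: powr_diff powr_numeral power2_eq_square)
  have "M2 * h * (h powr (1-a) / (1-a)) + M2 * h * h * \<phi> 1 = M2 * h powr (2-a) * (1 + 1/(1-a))"
    using e1 e2 a by (simp add: field_simps)
  with bnd sumE show ?thesis unfolding \<delta>_def W_def g_def u_def v_def by simp
qed



lemma abel:
  fixes b z :: "nat \<Rightarrow> real" and n :: nat
  assumes "1 \<le> n"
  shows "(\<Sum>i<n. b i * (z i - z (Suc i))) = b 0 * z 0 + (\<Sum>k\<in>{1..<n}. (b k - b (k-1)) * z k) - b (n-1) * z n"
  using assms
proof (induction n rule: dec_induct)
  case base then show ?case by (simp add: algebra_simps)
next
  case (step m)
  have "(\<Sum>k\<in>{1..<Suc m}. (b k - b (k-1)) * z k) = (\<Sum>k\<in>{1..<m}. (b k - b (k-1)) * z k) + (b m - b (m-1)) * z m"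
    using step by simp
  then show ?case using step by (simp add: algebra_simps)
qed

definition sL1 :: "real \<Rightarrow> nat \<Rightarrow> nat \<Rightarrow> real" where
  "sL1 a n k = (if k = 0 then 1 / Gamma (2 - a)
     else if k = n then ((real n - 1) powr (1 - a) - real n powr (1 - a)) / Gamma (2 - a)
     else ((real k - 1) powr (1 - a) - 2 * real k powr (1 - a) + (real k + 1) powr (1 - a)) / Gamma (2 - a))"

lemma sL1_sum:
  fixes a :: real and z :: "nat \<Rightarrow> real" and n :: nat
  assumes "1 \<le> n"
  shows "(\<Sum>k=0..n. sL1 a n k * z k)
    = (\<Sum>i<n. (real (Suc i) powr (1-a) - real i powr (1-a)) * (z i - z (Suc i))) / Gamma (2 - a)"
proof -
  define b where "b i = real (Suc i) powr (1-a) - real i powr (1-a)" for i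
  have "(\<Sum>k=0..n. sL1 a n k * z k) = sL1 a n 0 * z 0 + (\<Sum>k\<in>{1..<n}. sL1 a n k * z k) + sL1 a n n * z n"
  proof -
    have "{0..n} = insert 0 (insert n {1..<n})" using assms by auto
    then show ?thesis using assms by (simp add: algebra_simps)
  qed
  also have "\<dots> = (b 0 * z 0 + (\<Sum>k\<in>{1..<n}. (b k - b (k-1)) * z k) - b (n-1) * z n) / Gamma (2 - a)"
  proof -
    have "\<And>k. k \<in> {1..<n} \<Longrightarrow> sL1 a n k * z k = (b k - b (k-1)) * z k / Gamma (2 - a)"
      by (auto simp: sL1_def b_def of_nat_diff add.commute)
    then have "(\<Sum>k\<in>{1..<n}. sL1 a n k * z k) = (\<Sum>k\<in>{1..<n}. (b k - b (k-1)) * z k) / Gamma (2 - a)"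
      by (simp add: sum_divide_distrib)
    moreover have "sL1 a n 0 = b 0 / Gamma (2 - a)" by (simp add: sL1_def b_def)
    moreover have "sL1 a n n = - b (n-1) / Gamma (2 - a)"
      using assms by (simp add: sL1_def b_def of_nat_diff)
    ultimately show ?thesis by (simp add: diff_divide_distrib add_divide_distrib)
  qed
  also have "\<dots> = (\<Sum>i<n. b i * (z i - z (Suc i))) / Gamma (2 - a)"
    using abel[OF assms, of b z] by simp
  finally show ?thesis unfolding b_def .
qed

definition Cm :: "real \<Rightarrow> real" where
  "Cm a = 2 * \<bar>\<Prod>i<4. ((1-a) - real i)\<bar> / Gamma (2-a) + a / (12 * \<bar>Gamma (-2-a)\<bar>)"
definition Cl :: "real \<Rightarrow> real" where
  "Cl a = 2 * \<bar>\<Prod>i<3. ((1-a) - real i)\<bar> / Gamma (2-a) + 1 / (6 * \<bar>Gamma (-1-a)\<bar>)"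

lemma Cm_Cl_nonneg: "0 < a \<Longrightarrow> a < 1 \<Longrightarrow> 0 \<le> Cm a \<and> 0 \<le> Cl a"
proof -
  assume a: "0 < a" "a < 1"
  have g: "Gamma (2 - a) > 0" using Gamma_ids[OF a] by simp
  show ?thesis unfolding Cm_def Cl_def using g a
    by (intro conjI add_nonneg_nonneg divide_nonneg_pos divide_nonneg_nonneg) auto
qed

lemma big_k:
  fixes N k :: nat assumes "2 \<le> N" "\<not> int k \<le> \<lceil>real N / 5\<rceil>"
  shows "2 \<le> k" "1 / real k ^ 3 \<le> 125 / real N ^ 3"
proof -
  have c1: "1 \<le> \<lceil>real N / 5\<rceil>" using assms by simp
  then show "2 \<le> k" using assms by linarith
  have "real N / 5 \<le> real k"
  proof -
    have "real N / 5 \<le> of_int \<lceil>real N / 5\<rceil>" by (rule le_of_int_ceiling)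
    also have "\<dots> \<le> of_int (int k)" using assms(2) by linarith
    finally show ?thesis by simp
  qed
  then have "(real N / 5) ^ 3 \<le> real k ^ 3" by (intro power_mono) auto
  then have "real N ^ 3 \<le> 125 * real k ^ 3" by (simp add: power_divide)
  moreover have "real N > 0" using assms by simp
  moreover have "real k > 0" using \<open>2 \<le> k\<close> by simp
  ultimately show "1 / real k ^ 3 \<le> 125 / real N ^ 3" by (simp add: field_simps)
qed

lemma sig_diff:
  fixes a :: real and N n k :: nat
  assumes a: "0 < a" "a < 1" and N: "2 \<le> N" and n: "1 \<le> n" and k: "k \<le> n"
  shows "\<bar>sigma_bar a N n k - sL1 a n k\<bar> \<le> 125 * Cm a / real N ^ 3 + (if k = n then Cl a / real n ^ 2 else 0)"
proof -
  have Cnn: "0 \<le> Cm a" "0 \<le> Cl a" using Cm_Cl_nonneg[OF a] by auto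
  have p0: "0 \<le> 125 * Cm a / real N ^ 3" using Cnn by simp
  show ?thesis
  proof (cases "k = 0")
    case True then show ?thesis using n p0 by (simp add: sigma_bar_def sL1_def)
  next
    case k0: False
    show ?thesis
    proof (cases "k = n")
      case kn: True
      show ?thesis
      proof (cases "int n \<le> \<lceil>real N / 5\<rceil>")
        case True then have "sigma_bar a N n k = sL1 a n k" using kn k0 unfolding sigma_bar_def sL1_def Let_def by simp
        then show ?thesis using p0 Cnn by simp
      next
        case False
        have n2: "2 \<le> n" using big_k[OF N False] by simp
        have sb: "sigma_bar a N n k = - (real n powr (- a)) / Gamma (1 - a)
             + real n powr (- a - 1) / (2 * Gamma (- a))
             - real n powr (- a - 2) / (6 * Gamma (- 1 - a))"
          using False kn k0 unfolding sigma_bar_def Let_def by simp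
        have sl: "sL1 a n k = ((real n - 1) powr (1 - a) - real n powr (1 - a)) / Gamma (2 - a)"
          using kn k0 unfolding sL1_def by simp
        have "\<bar>sigma_bar a N n k - sL1 a n k\<bar> \<le> Cl a / real n ^ 2"
          unfolding sb sl Cl_def using wdiff_last[OF a, of "real n"] n2
          by (subst abs_minus_commute) simp
        then show ?thesis using kn p0 by simp
      qed
    next
      case kn: False
      show ?thesis
      proof (cases "int k \<le> \<lceil>real N / 5\<rceil>")
        case True then have "sigma_bar a N n k = sL1 a n k" using kn k0 unfolding sigma_bar_def sL1_def Let_def by simp
        then show ?thesis using p0 Cnn by simp
      next
        case False
        note bk = big_k[OF N False]
        have sb: "sigma_bar a N n k = 1 / (Gamma (- a) * real k powr (1 + a)) + a / (12 * Gamma (- 2 - a) * real k powr (3 + a))"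
          using False kn k0 unfolding sigma_bar_def Let_def by simp
        have sl: "sL1 a n k = ((real k - 1) powr (1 - a) - 2 * real k powr (1 - a) + (real k + 1) powr (1 - a)) / Gamma (2 - a)"
          using kn k0 unfolding sL1_def by simp
        have "\<bar>sigma_bar a N n k - sL1 a n k\<bar> \<le> Cm a / real k ^ 3"
          unfolding sb sl Cm_def using wdiff_mid[OF a, of "real k"] bk
          by (subst abs_minus_commute) simp
        also have "\<dots> = Cm a * (1 / real k ^ 3)" by simp
        also have "\<dots> \<le> Cm a * (125 / real N ^ 3)" using bk Cnn by (intro mult_left_mono) auto
        finally show ?thesis using kn by (simp add: mult.commute)
      qed
    qed
  qed
qed



theorem mainTheorem10:
  fixes \<alpha> T x :: real and y y1 y2 :: "real \<Rightarrow> real"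
  assumes "0 < \<alpha>" "\<alpha> < 1" "0 < T" "0 < x" "x \<le> T"
    and "\<And>t. t \<in> {0..T} \<Longrightarrow> (y has_real_derivative y1 t) (at t within {0..T})"
    and "\<And>t. t \<in> {0..T} \<Longrightarrow> (y1 has_real_derivative y2 t) (at t within {0..T})"
    and "continuous_on {0..T} y2"
  shows "\<exists>C h0. 0 < h0 \<and> (\<forall>N n::nat. 2 \<le> N \<longrightarrow> real n * (T / real N) = x \<longrightarrow> T / real N < h0 \<longrightarrow>
           \<bar>(1 / (T / real N) powr \<alpha>) * (\<Sum>k=0..n. sigma_bar \<alpha> N n k * y (real (n - k) * (T / real N)))
              - caputo \<alpha> y1 x\<bar> \<le> C * (T / real N) powr (2 - \<alpha>))"
proof -
  note a = assms(1,2)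
  have yc: "continuous_on {0..T} y" by (rule DERIV_continuous_on[OF assms(6)])
  obtain M0 where M0: "\<And>t. t \<in> {0..T} \<Longrightarrow> \<bar>y t\<bar> \<le> M0"
  proof -
    have "bounded (y ` {0..T})" by (intro compact_imp_bounded compact_continuous_image yc) auto
    then obtain B where "\<forall>v\<in>y ` {0..T}. norm v \<le> B" by (auto simp: bounded_iff)
    then have "\<forall>t\<in>{0..T}. \<bar>y t\<bar> \<le> B" by auto
    then show ?thesis using that by blast
  qed
  obtain M2 where M2: "\<And>t. t \<in> {0..T} \<Longrightarrow> \<bar>y2 t\<bar> \<le> M2"
  proof -
    have "bounded (y2 ` {0..T})" by (intro compact_imp_bounded compact_continuous_image assms(8)) auto
    then obtain B where "\<forall>v\<in>y2 ` {0..T}. norm v \<le> B" by (auto simp: bounded_iff)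
    then have "\<forall>t\<in>{0..T}. \<bar>y2 t\<bar> \<le> B" by auto
    then show ?thesis using that by blast
  qed
  have M0pos: "0 \<le> M0" using M0[of 0] assms(3) by auto
  have G: "Gamma (2 - \<alpha>) = (1 - \<alpha>) * Gamma (1 - \<alpha>)" "Gamma (1 - \<alpha>) > 0"
    using Gamma_ids[OF a] by auto
  have Cnn: "0 \<le> Cm \<alpha>" "0 \<le> Cl \<alpha>" using Cm_Cl_nonneg[OF a] by auto
  define C where "C = M0 * (250 * Cm \<alpha> / T^2 + Cl \<alpha> / x^2) + M2 * (1 + 1/(1-\<alpha>)) / Gamma (1-\<alpha>)"
  show ?thesis
  proof (rule exI[of _ C], rule exI[of _ 1], intro conjI allI impI)
    fix N n :: nat
    assume N: "2 \<le> N" and nx: "real n * (T / real N) = x" and "T / real N < 1"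
    define h where "h = T / real N"
    have h: "0 < h" unfolding h_def using N assms(3) by simp
    have xn: "x = real n * h" using nx unfolding h_def by simp
    have n1: "1 \<le> n" using xn assms(4) h by (cases n) auto
    have TN: "T = real N * h" unfolding h_def using N by simp
    have nN: "n \<le> N"
    proof -
      have "real n * h \<le> real N * h" using xn TN assms(5) by simp
      then have "real n \<le> real N" using h by simp
      then show ?thesis by simp
    qed
    define z where "z k = y (real (n - k) * h)" for k
    have zx: "\<And>k. k \<le> n \<Longrightarrow> z k = y (x - real k * h)"
      unfolding z_def xn by (simp add: of_nat_diff algebra_simps)
    have zb: "\<And>k. k \<le> n \<Longrightarrow> \<bar>z k\<bar> \<le> M0"
    proof -
      fix k assume k: "k \<le> n"
      have "real (n - k) * h \<le> real N * h" using k nN h by (intro mult_right_mono) auto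
      then show "\<bar>z k\<bar> \<le> M0" unfolding z_def using h TN by (intro M0) auto
    qed
    define b where "b i = real (Suc i) powr (1-\<alpha>) - real i powr (1-\<alpha>)" for i
    define Q where "Q = (\<Sum>i<n. (y (x - real i * h) - y (x - real (Suc i) * h)) / h
            * (h powr (1-\<alpha>) * (real (Suc i) powr (1-\<alpha>) - real i powr (1-\<alpha>)) / (1-\<alpha>)))"
    define I where "I = integral {0..x} (\<lambda>t. y1 t / (x - t) powr \<alpha>)"
    have QI: "\<bar>Q - I\<bar> \<le> M2 * h powr (2-\<alpha>) * (1 + 1/(1-\<alpha>))"
      unfolding Q_def I_def
      by (rule L1_err[OF a h n1 xn assms(5) assms(6) assms(7) M2])
    have hp: "h powr (1-\<alpha>) / h = 1 / h powr \<alpha>"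
      using h by (simp add: powr_diff)
    have Qz: "Q = (\<Sum>i<n. (z i - z (Suc i)) * b i * (h powr (1-\<alpha>) / h) / (1-\<alpha>))"
      unfolding Q_def b_def using zx by (intro sum.cong) auto
    have L1id: "(1 / h powr \<alpha>) * (\<Sum>k=0..n. sL1 \<alpha> n k * z k) = Q / Gamma (1 - \<alpha>)"
    proof -
      have "(1 / h powr \<alpha>) * (\<Sum>k=0..n. sL1 \<alpha> n k * z k)
          = (1 / h powr \<alpha>) * ((\<Sum>i<n. b i * (z i - z (Suc i))) / Gamma (2 - \<alpha>))"
        using sL1_sum[OF n1, of \<alpha> z] unfolding b_def by simp
      also have "\<dots> = (\<Sum>i<n. (z i - z (Suc i)) * b i * (h powr (1-\<alpha>) / h) / (1-\<alpha>)) / Gamma (1 - \<alpha>)"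
        unfolding hp G(1) using a G(2)
        by (simp add: sum_distrib_left sum_divide_distrib field_simps)
      finally show ?thesis using Qz by simp
    qed
    have caputo: "caputo \<alpha> y1 x = I / Gamma (1 - \<alpha>)" unfolding caputo_def I_def by simp
    have split: "(1 / h powr \<alpha>) * (\<Sum>k=0..n. sigma_bar \<alpha> N n k * z k) - caputo \<alpha> y1 x
        = (1 / h powr \<alpha>) * (\<Sum>k=0..n. (sigma_bar \<alpha> N n k - sL1 \<alpha> n k) * z k) + (Q - I) / Gamma (1 - \<alpha>)"
    proof -
      have "(\<Sum>k=0..n. sigma_bar \<alpha> N n k * z k) = (\<Sum>k=0..n. (sigma_bar \<alpha> N n k - sL1 \<alpha> n k) * z k) + (\<Sum>k=0..n. sL1 \<alpha> n k * z k)"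
        by (simp add: sum.distrib[symmetric] algebra_simps)
      then show ?thesis using L1id caputo by (simp add: algebra_simps diff_divide_distrib)
    qed
    have S1: "\<bar>\<Sum>k=0..n. (sigma_bar \<alpha> N n k - sL1 \<alpha> n k) * z k\<bar>
        \<le> M0 * (real (Suc n) * (125 * Cm \<alpha> / real N ^ 3) + Cl \<alpha> / real n ^ 2)"
    proof -
      have "\<bar>\<Sum>k=0..n. (sigma_bar \<alpha> N n k - sL1 \<alpha> n k) * z k\<bar> \<le> (\<Sum>k=0..n. \<bar>(sigma_bar \<alpha> N n k - sL1 \<alpha> n k) * z k\<bar>)"
        by (rule sum_abs)
      also have "\<dots> \<le> (\<Sum>k=0..n. (125 * Cm \<alpha> / real N ^ 3 + (if k = n then Cl \<alpha> / real n ^ 2 else 0)) * M0)"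
      proof (rule sum_mono)
        fix k assume k: "k \<in> {0..n}"
        show "\<bar>(sigma_bar \<alpha> N n k - sL1 \<alpha> n k) * z k\<bar> \<le> (125 * Cm \<alpha> / real N ^ 3 + (if k = n then Cl \<alpha> / real n ^ 2 else 0)) * M0"
          unfolding abs_mult using sig_diff[OF a N n1, of k] zb[of k] k
          by (intro mult_mono) auto
      qed
      also have "\<dots> = M0 * (real (Suc n) * (125 * Cm \<alpha> / real N ^ 3) + Cl \<alpha> / real n ^ 2)"
      proof -
        have d: "(\<Sum>k = 0..n. M0 * (if k = n then Cl \<alpha> / (real n)^2 else 0)) = M0 * Cl \<alpha> / (real n)^2"
        proof -
          have "(\<Sum>k = 0..n. M0 * (if k = n then Cl \<alpha> / (real n)^2 else 0)) = (\<Sum>k = 0..n. if k = n then M0 * (Cl \<alpha> / (real n)^2) else 0)"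
            by (rule sum.cong) auto
          then show ?thesis by simp
        qed
        show ?thesis using d by (simp add: sum.distrib sum_distrib_right[symmetric] algebra_simps)
      qed
      finally show ?thesis .
    qed
    have e1: "real (Suc n) * (125 * Cm \<alpha> / real N ^ 3) \<le> 250 * Cm \<alpha> * h^2 / T^2"
    proof -
      have "real (Suc n) \<le> 2 * real N" using nN N by simp
      then have "real (Suc n) * (125 * Cm \<alpha> / real N ^ 3) \<le> 2 * real N * (125 * Cm \<alpha> / real N ^ 3)"
        using Cnn by (intro mult_right_mono) auto
      also have "\<dots> = 250 * Cm \<alpha> / real N ^ 2" using N by (simp add: power3_eq_cube power2_eq_square)
      also have "\<dots> = 250 * Cm \<alpha> * h^2 / T^2" unfolding TN using h by (simp add: power_mult_distrib)
      finally show ?thesis .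
    qed
    have e2: "Cl \<alpha> / real n ^ 2 = Cl \<alpha> * h^2 / x^2" unfolding xn using h by (simp add: power_mult_distrib)
    have hh: "(1 / h powr \<alpha>) * h^2 = h powr (2 - \<alpha>)"
      using h by (simp add: powr_diff powr_numeral)
    have part1: "\<bar>(1 / h powr \<alpha>) * (\<Sum>k=0..n. (sigma_bar \<alpha> N n k - sL1 \<alpha> n k) * z k)\<bar>
        \<le> M0 * (250 * Cm \<alpha> / T^2 + Cl \<alpha> / x^2) * h powr (2 - \<alpha>)"
    proof -
      have "\<bar>(1 / h powr \<alpha>) * (\<Sum>k=0..n. (sigma_bar \<alpha> N n k - sL1 \<alpha> n k) * z k)\<bar>
          \<le> (1 / h powr \<alpha>) * (M0 * (real (Suc n) * (125 * Cm \<alpha> / real N ^ 3) + Cl \<alpha> / real n ^ 2))"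
      proof -
        have "\<bar>1 / h powr \<alpha>\<bar> = 1 / h powr \<alpha>" using h by simp
        moreover have "0 \<le> 1 / h powr \<alpha>" using h by simp
        ultimately show ?thesis unfolding abs_mult using S1 by (metis mult_left_mono)
      qed
      also have "\<dots> \<le> (1 / h powr \<alpha>) * (M0 * (250 * Cm \<alpha> * h^2 / T^2 + Cl \<alpha> * h^2 / x^2))"
        using e1 e2 M0pos h by (intro mult_left_mono) auto
      also have "\<dots> = M0 * (250 * Cm \<alpha> / T^2 + Cl \<alpha> / x^2) * ((1 / h powr \<alpha>) * h^2)"
        by (simp add: algebra_simps)
      finally show ?thesis unfolding hh .
    qed
    have part2: "\<bar>(Q - I) / Gamma (1 - \<alpha>)\<bar> \<le> M2 * (1 + 1/(1-\<alpha>)) / Gamma (1-\<alpha>) * h powr (2 - \<alpha>)"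
    proof -
      have "\<bar>(Q - I) / Gamma (1 - \<alpha>)\<bar> = \<bar>Q - I\<bar> / Gamma (1 - \<alpha>)" using G by simp
      also have "\<dots> \<le> M2 * h powr (2-\<alpha>) * (1 + 1/(1-\<alpha>)) / Gamma (1 - \<alpha>)"
        using QI G by (intro divide_right_mono) auto
      finally show ?thesis by (simp add: algebra_simps)
    qed
    have "\<bar>(1 / h powr \<alpha>) * (\<Sum>k=0..n. sigma_bar \<alpha> N n k * z k) - caputo \<alpha> y1 x\<bar> \<le> C * h powr (2 - \<alpha>)"
      unfolding split C_def using part1 part2 abs_triangle_ineq[of "(1 / h powr \<alpha>) * (\<Sum>k=0..n. (sigma_bar \<alpha> N n k - sL1 \<alpha> n k) * z k)" "(Q - I) / Gamma (1 - \<alpha>)"]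
      by (simp add: algebra_simps)
    then show "\<bar>(1 / (T / real N) powr \<alpha>) * (\<Sum>k=0..n. sigma_bar \<alpha> N n k * y (real (n - k) * (T / real N)))
              - caputo \<alpha> y1 x\<bar> \<le> C * (T / real N) powr (2 - \<alpha>)"
      unfolding z_def h_def .
  qed simp
qed

end
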